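(* The kernel of the Hopf algebra homomorphism $\varphi:\mathrm{WCQSym}\to\mathrm{QSym}$, defined by $\varphi(M_\alpha)=(-1)^{\ell_\varepsilon(\alpha)}M_{\bar\alpha}$ if $\alpha\in\mathcal C_N$ and $\varphi(M_\alpha)=0$ if $\alpha\in\mathcal C_\varepsilon$, is the ideal of $\mathrm{WCQSym}$ generated by the set $B_\varepsilon=\{M_\alpha:\alpha\in\mathcal C_\varepsilon\}$.
   Context: $\tilde{\mathbb N}=\mathbb N\cup\{\varepsilon\}$ with $0+\varepsilon=\varepsilon+\varepsilon=\varepsilon$ and $n+\varepsilon=n$ for integers $n\ge1$. $\mathbf{k}$ is a commutative ring containing $\mathbb Q$; $\mathbf{k}[[X]]_{\tilde{\mathbb N}}$, $X=\{x_1<x_2<\cdots\}$, is the algebra of possibly infinite linear combinations of formal monomials $\prod x_i^{f(x_i)}$ with $f$ finitely supported $\tilde{\mathbb N}$-valued, multiplied by adding exponents in $\tilde{\mathbb N}$. An $\tilde{\mathbb N}$-composition is a finite (possibly empty) sequence of elements of $\{\varepsilon,1,2,\dots\}$; $M_{(\alpha_1,\dots,\alpha_k)}=\sum_{1\le i_1<\cdots<i_k}x_{i_1}^{\alpha_1}\cdots x_{i_k}^{\alpha_k}$, $M_\emptyset=1$. $\mathrm{WCQSym}$ is the $\mathbf k$-span of all $M_\alpha$ (a Hopf algebra with deconcatenation coproduct $\Delta(M_{(\alpha_1,\dots,\alpha_k)})=\sum_{i=0}^kM_{(\alpha_1,\dots,\alpha_i)}\otimes M_{(\alpha_{i+1},\dots,\alpha_k)}$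 and counit $\epsilon(M_\alpha)=\delta_{\alpha,\emptyset}$), and $\mathrm{QSym}$ the Hopf subalgebra spanned by the $M_\alpha$ with all entries positive integers. $\ell_\varepsilon(\alpha)$ is the number of entries equal to $\varepsilon$, $\bar\alpha$ is $\alpha$ with its $\varepsilon$ entries deleted. $\mathcal C_\varepsilon$ is the set of $\tilde{\mathbb N}$-compositions with first entry $\varepsilon$, $\mathcal C_N$ the set of all others (including the empty one). *)

theory Defs
  imports Main
begin

text \<open>The extended naturals Ntilde = N with an extra element eps.
  Nt 0 is the integer 0, Nt n the integer n, Eps is epsilon.\<close>
datatype ntil = Eps | Nt nat

fun tadd :: "ntil \<Rightarrow> ntil \<Rightarrow> ntil" where
  "tadd (Nt a) (Nt b) = Nt (a + b)"
| "tadd Eps Eps = Eps"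
| "tadd (Nt n) Eps = (if n = 0 then Eps else Nt n)"
| "tadd Eps (Nt n) = (if n = 0 then Eps else Nt n)"

text \<open>Formal monomials: exponent functions on the variables x_0 < x_1 < ... (indexed by nat)
  with finite support.  Power series: coefficient functions on exponent functions
  (coefficients off genuine monomials are kept 0 by all constructions below).\<close>
type_synonym 'k ser = "(nat \<Rightarrow> ntil) \<Rightarrow> 'k"

definition is_mono :: "(nat \<Rightarrow> ntil) \<Rightarrow> bool" where
  "is_mono f \<longleftrightarrow> finite {i. f i \<noteq> Nt 0}"

definition szero :: "'k::comm_ring_1 ser" where
  "szero = (\<lambda>h. 0)"

definition sadd :: "'k::comm_ring_1 ser \<Rightarrow> 'k ser \<Rightarrow> 'k ser" where
  "sadd A B = (\<lambda>h. A h + B h)"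

definition sscale :: "'k::comm_ring_1 \<Rightarrow> 'k ser \<Rightarrow> 'k ser" where
  "sscale c A = (\<lambda>h. c * A h)"

definition smult :: "'k::comm_ring_1 ser \<Rightarrow> 'k ser \<Rightarrow> 'k ser" where
  "smult A B = (\<lambda>h. if is_mono h then
      (\<Sum>p\<in>{(f, g). is_mono f \<and> is_mono g \<and> (\<forall>i. tadd (f i) (g i) = h i)}.
          A (fst p) * B (snd p))
    else 0)"

definition is_comp :: "ntil list \<Rightarrow> bool" where
  "is_comp \<alpha> \<longleftrightarrow> Nt 0 \<notin> set \<alpha>"

definition nzvals :: "(nat \<Rightarrow> ntil) \<Rightarrow> ntil list" where
  "nzvals f = map f (sorted_list_of_set {i. f i \<noteq> Nt 0})"

text \<open>Monomial quasisymmetric function M_alpha = sum over i_1<...<i_k of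
  x_{i_1}^{alpha_1} ... x_{i_k}^{alpha_k}; M_[] = 1.\<close>
definition Mser :: "ntil list \<Rightarrow> 'k::comm_ring_1 ser" where
  "Mser \<alpha> = (\<lambda>h. if is_mono h \<and> nzvals h = \<alpha> then 1 else 0)"

definition WCQSym :: "'k::comm_ring_1 ser set" where
  "WCQSym = {x. \<exists>S c. finite S \<and> (\<forall>\<alpha>\<in>S. is_comp \<alpha>) \<and>
                       x = (\<lambda>h. \<Sum>\<alpha>\<in>S. c \<alpha> * Mser \<alpha> h)}"

definition C_eps :: "ntil list set" where
  "C_eps = {\<alpha>. is_comp \<alpha> \<and> \<alpha> \<noteq> [] \<and> hd \<alpha> = Eps}"

definition C_N :: "ntil list set" where
  "C_N = {\<alpha>. is_comp \<alpha> \<and> (\<alpha> = [] \<or> hd \<alpha> \<noteq> Eps)}"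

definition ell_eps :: "ntil list \<Rightarrow> nat" where
  "ell_eps \<alpha> = length (filter (\<lambda>a. a = Eps) \<alpha>)"

definition bar :: "ntil list \<Rightarrow> ntil list" where
  "bar \<alpha> = filter (\<lambda>a. a \<noteq> Eps) \<alpha>"

definition gen_ideal :: "'k::comm_ring_1 ser set \<Rightarrow> 'k ser set \<Rightarrow> 'k ser set" where
  "gen_ideal A B = \<Inter> {I. I \<subseteq> A \<and> B \<subseteq> I \<and> szero \<in> I \<and>
      (\<forall>x\<in>I. \<forall>y\<in>I. sadd x y \<in> I) \<and> (\<forall>a\<in>A. \<forall>x\<in>I. smult a x \<in> I)}"

end

theory Submission
  imports Defs
begin

lemma tadd_zero_iff: "tadd p q = Nt 0 \<longleftrightarrow> p = Nt 0 \<and> q = Nt 0"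
  by (cases p; cases q) auto

definition ser :: "(ntil list \<Rightarrow> 'k::comm_ring_1) \<Rightarrow> 'k ser" where
  "ser c = (\<lambda>h. if is_mono h then c (nzvals h) else 0)"

definition nz :: "ntil list \<Rightarrow> ntil list" where
  "nz xs = filter (\<lambda>x. x \<noteq> Nt 0) xs"

definition seqs :: "ntil list \<Rightarrow> (ntil \<times> ntil) list set" where
  "seqs g = {s. length s = length g \<and> (\<forall>i<length s. tadd (fst (s!i)) (snd (s!i)) = g!i)}"

definition splits :: "ntil \<Rightarrow> (ntil \<times> ntil) set" where
  "splits x = {p. tadd (fst p) (snd p) = x}"

definition conv :: "(ntil list \<Rightarrow> 'k::comm_ring_1) \<Rightarrow> (ntil list \<Rightarrow> 'k) \<Rightarrow> ntil list \<Rightarrow> 'k" where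
  "conv c d g = (\<Sum>s\<in>seqs g. c (nz (map fst s)) * d (nz (map snd s)))"

lemma sorted_list_subset:
  assumes "finite S" "T \<subseteq> S"
  shows "sorted_list_of_set T = filter (\<lambda>i. i \<in> T) (sorted_list_of_set S)"
proof -
  have fT: "finite T" using assms finite_subset by blast
  show ?thesis
    by (rule sorted_distinct_set_unique) (use assms fT in \<open>auto intro: sorted_wrt_filter\<close>)
qed

lemma nzvals_sub:
  assumes "finite S" "{i. f i \<noteq> Nt 0} \<subseteq> S"
  shows "nzvals f = nz (map f (sorted_list_of_set S))"
proof -
  have "sorted_list_of_set {i. f i \<noteq> Nt 0} = filter (\<lambda>i. i \<in> {i. f i \<noteq> Nt 0}) (sorted_list_of_set S)"
    by (rule sorted_list_subset[OF assms])
  then show ?thesis unfolding nzvals_def nz_def by (simp add: filter_map comp_def)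
qed

lemma smult_ser: "smult (ser c) (ser d) = ser (conv c d)"
proof
  fix h :: "nat \<Rightarrow> ntil"
  show "smult (ser c) (ser d) h = ser (conv c d) h"
  proof (cases "is_mono h")
    case False then show ?thesis by (simp add: smult_def ser_def)
  next
    case True
    define S where "S = {i. h i \<noteq> Nt 0}"
    have fS: "finite S" using True by (simp add: is_mono_def S_def)
    define L where "L = sorted_list_of_set S"
    have dL: "distinct L" and sL: "set L = S" using fS by (auto simp: L_def)
    have nzh: "nzvals h = map h L" by (simp add: nzvals_def L_def S_def)
    define P where "P = {(f, g). is_mono f \<and> is_mono g \<and> (\<forall>i. tadd (f i) (g i) = h i)}"
    define Lam where "Lam = (\<lambda>(f::nat\<Rightarrow>ntil, g::nat\<Rightarrow>ntil). zip (map f L) (map g L))"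
    have suppf: "{i. f i \<noteq> Nt 0} \<subseteq> S" "{i. g i \<noteq> Nt 0} \<subseteq> S" if "(f, g) \<in> P" for f g
      using that by (auto simp: P_def S_def) (metis tadd_zero_iff)+
    have inj: "inj_on Lam P"
    proof (rule inj_onI)
      fix p q assume p: "p \<in> P" and q: "q \<in> P" and eq: "Lam p = Lam q"
      obtain f g where pf: "p = (f, g)" by (cases p)
      obtain f' g' where qf: "q = (f', g')" by (cases q)
      have m: "map f L = map f' L" "map g L = map g' L"
        using eq by (simp_all add: Lam_def pf qf zip_eq_conv)
      have "f = f'"
      proof
        fix i show "f i = f' i"
        proof (cases "i \<in> S")
          case True then show ?thesis using m sL by (metis map_eq_conv)
        next
          case False then have "f i = Nt 0" "f' i = Nt 0" "g i = Nt 0" "g' i = Nt 0"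
            using suppf[OF p[unfolded pf]] suppf[OF q[unfolded qf]] by blast+
          then show ?thesis by simp
        qed
      qed
      moreover have "g = g'"
      proof
        fix i show "g i = g' i"
        proof (cases "i \<in> S")
          case True then show ?thesis using m sL by (metis map_eq_conv)
        next
          case False then have "f i = Nt 0" "f' i = Nt 0" "g i = Nt 0" "g' i = Nt 0"
            using suppf[OF p[unfolded pf]] suppf[OF q[unfolded qf]] by blast+
          then show ?thesis by simp
        qed
      qed
      ultimately show "p = q" by (simp add: pf qf)
    qed
    have img: "Lam ` P = seqs (nzvals h)"
    proof
      show "Lam ` P \<subseteq> seqs (nzvals h)"
        by (auto simp: Lam_def P_def seqs_def nzh)
    next
      show "seqs (nzvals h) \<subseteq> Lam ` P"
      proof
        fix s assume s: "s \<in> seqs (nzvals h)"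
        have ls: "length s = length L" and st: "\<forall>i<length s. tadd (fst (s!i)) (snd (s!i)) = h (L!i)"
          using s by (auto simp: seqs_def nzh)
        define ext where "ext = (\<lambda>xs i. case map_of (zip L xs) i of None \<Rightarrow> Nt 0 | Some v \<Rightarrow> v)"
        define f where "f = ext (map fst s)"
        define g where "g = ext (map snd s)"
        have extn: "ext xs (L!k) = xs!k" if "length xs = length L" "k < length L" for xs k
          using map_of_zip_nth[of L xs k] that dL by (simp add: ext_def)
        have exto: "ext xs i = Nt 0" if "length xs = length L" "i \<notin> S" for xs i
        proof -
          have "map_of (zip L xs) i = None" using that sL map_of_zip_is_None[of L xs i] by simp
          then show ?thesis by (simp add: ext_def)
        qed
        have sub: "{i. ext xs i \<noteq> Nt 0} \<subseteq> S" if "length xs = length L" for xs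
          using exto[OF that] by blast
        have mf: "is_mono f" "is_mono g"
          using sub[of "map fst s"] sub[of "map snd s"] ls fS
          by (auto simp: is_mono_def f_def g_def intro: finite_subset)
        have ta: "tadd (f i) (g i) = h i" for i
        proof (cases "i \<in> S")
          case True
          then obtain k where k: "k < length L" "i = L!k" using sL by (metis in_set_conv_nth)
          then show ?thesis using st ls extn[of "map fst s" k] extn[of "map snd s" k]
            by (simp add: f_def g_def)
        next
          case False then show ?thesis using exto ls by (simp add: f_def g_def S_def)
        qed
        have "Lam (f, g) = s"
        proof (rule nth_equalityI)
          show "length (Lam (f, g)) = length s" using ls by (simp add: Lam_def)
          fix k assume "k < length (Lam (f, g))"
          then have k: "k < length L" by (simp add: Lam_def)
          then show "Lam (f, g) ! k = s ! k"
            using extn[of "map fst s" k] extn[of "map snd s" k] ls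
            by (simp add: Lam_def f_def g_def)
        qed
        moreover have "(f, g) \<in> P" using mf ta by (simp add: P_def)
        ultimately show "s \<in> Lam ` P" by blast
      qed
    qed
    have "smult (ser c) (ser d) h = (\<Sum>p\<in>P. ser c (fst p) * ser d (snd p))"
      using True by (simp add: smult_def P_def)
    also have "\<dots> = (\<Sum>p\<in>P. c (nz (map fst (Lam p))) * d (nz (map snd (Lam p))))"
    proof (rule sum.cong[OF refl])
      fix p assume p: "p \<in> P"
      obtain f g where pf: "p = (f, g)" by (cases p)
      have "nzvals f = nz (map f L)" "nzvals g = nz (map g L)"
        using nzvals_sub[OF fS suppf(1)[OF p[unfolded pf]]] nzvals_sub[OF fS suppf(2)[OF p[unfolded pf]]]
        by (simp_all add: L_def)
      then show "ser c (fst p) * ser d (snd p) = c (nz (map fst (Lam p))) * d (nz (map snd (Lam p)))"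
        using p by (simp add: pf ser_def P_def Lam_def)
    qed
    also have "\<dots> = (\<Sum>s\<in>Lam ` P. c (nz (map fst s)) * d (nz (map snd s)))"
      by (rule sum.reindex[OF inj, symmetric, unfolded comp_def])
    also have "\<dots> = ser (conv c d) h" using True by (simp add: img ser_def conv_def)
    finally show ?thesis .
  qed
qed

fun nval :: "ntil \<Rightarrow> nat" where
  "nval Eps = 0" | "nval (Nt n) = n"

lemma nval_tadd: "nval (tadd p q) = nval p + nval q"
  by (cases p; cases q) auto

lemma splits_sub: "splits x \<subseteq> insert Eps (Nt ` {..nval x}) \<times> insert Eps (Nt ` {..nval x})"
proof
  fix p assume "p \<in> splits x"
  then have e: "tadd (fst p) (snd p) = x" by (simp add: splits_def)
  have "nval (fst p) \<le> nval x" "nval (snd p) \<le> nval x" using nval_tadd[of "fst p" "snd p"] e by auto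
  then show "p \<in> insert Eps (Nt ` {..nval x}) \<times> insert Eps (Nt ` {..nval x})"
    by (cases p; cases "fst p"; cases "snd p") (auto simp: mem_Times_iff)
qed

lemma finite_splits: "finite (splits x)"
  by (rule finite_subset[OF splits_sub]) auto

lemma seqs_Nil: "seqs [] = {[]}" by (auto simp: seqs_def)

lemma seqs_Cons: "seqs (x # g) = (\<lambda>(p, s). p # s) ` (splits x \<times> seqs g)"
proof
  show "seqs (x # g) \<subseteq> (\<lambda>(p, s). p # s) ` (splits x \<times> seqs g)"
  proof
    fix s assume s: "s \<in> seqs (x # g)"
    then obtain p s' where ps: "s = p # s'" by (cases s) (auto simp: seqs_def)
    have "p \<in> splits x" using s ps by (auto simp: seqs_def splits_def)
    moreover have "s' \<in> seqs g"
    proof -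
      have "length s' = length g" using s ps by (simp add: seqs_def)
      moreover have "tadd (fst (s'!i)) (snd (s'!i)) = g!i" if "i < length s'" for i
        using s ps that by (auto simp: seqs_def dest!: spec[of _ "Suc i"])
      ultimately show ?thesis by (simp add: seqs_def)
    qed
    ultimately show "s \<in> (\<lambda>(p, s). p # s) ` (splits x \<times> seqs g)" using ps by blast
  qed
next
  show "(\<lambda>(p, s). p # s) ` (splits x \<times> seqs g) \<subseteq> seqs (x # g)"
    by (auto simp: seqs_def splits_def nth_Cons split: nat.split)
qed

lemma finite_seqs: "finite (seqs g)"
  by (induction g) (auto simp: seqs_Nil seqs_Cons finite_splits)

definition shc :: "(ntil list \<Rightarrow> 'k) \<Rightarrow> ntil \<Rightarrow> ntil list \<Rightarrow> 'k" where
  "shc c a w = c (if a = Nt 0 then w else a # w)"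

lemma conv_Nil: "conv c d [] = c [] * d []"
  by (simp add: conv_def seqs_Nil nz_def)

lemma conv_Cons: "conv c d (x # g) = (\<Sum>p\<in>splits x. conv (shc c (fst p)) (shc d (snd p)) g)"
proof -
  have inj: "inj_on (\<lambda>(p, s). p # s) (splits x \<times> seqs g)" by (auto simp: inj_on_def)
  have "conv c d (x # g) = (\<Sum>(p, s)\<in>splits x \<times> seqs g. c (nz (map fst (p # s))) * d (nz (map snd (p # s))))"
    unfolding conv_def seqs_Cons by (subst sum.reindex[OF inj]) (simp add: comp_def case_prod_unfold)
  also have "\<dots> = (\<Sum>p\<in>splits x. \<Sum>s\<in>seqs g. c (nz (map fst (p # s))) * d (nz (map snd (p # s))))"
    by (simp add: sum.cartesian_product)
  also have "\<dots> = (\<Sum>p\<in>splits x. conv (shc c (fst p)) (shc d (snd p)) g)"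
    by (rule sum.cong[OF refl]) (auto simp: conv_def shc_def nz_def intro!: sum.cong)
  finally show ?thesis .
qed

definition dl :: "ntil list \<Rightarrow> ntil list \<Rightarrow> 'k::comm_ring_1" where
  "dl u = (\<lambda>g. if g = u then 1 else 0)"

definition pre :: "ntil \<Rightarrow> (ntil list \<Rightarrow> 'k::comm_ring_1) \<Rightarrow> ntil list \<Rightarrow> 'k" where
  "pre a F = (\<lambda>g. case g of [] \<Rightarrow> 0 | x # g' \<Rightarrow> if x = a then F g' else 0)"

fun qs :: "ntil list \<Rightarrow> ntil list \<Rightarrow> ntil list \<Rightarrow> 'k::comm_ring_1" where
  "qs [] v = dl v"
| "qs (a # u) [] = dl (a # u)"
| "qs (a # u) (b # v) = (\<lambda>g. pre a (qs u (b # v)) g + pre b (qs (a # u) v) g + pre (tadd a b) (qs u v) g)"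

lemma qs_Nil2 [simp]: "qs u [] = dl u"
  by (cases u) auto

lemma conv_zero1: "conv (\<lambda>_. 0) d g = 0" by (simp add: conv_def)
lemma conv_zero2: "conv c (\<lambda>_. 0) g = 0" by (simp add: conv_def)

lemma shc_dl: "shc (dl u) a = (if a = Nt 0 then dl u else if u \<noteq> [] \<and> hd u = a then dl (tl u) else (\<lambda>_. 0))"
  by (cases u) (auto simp: shc_def dl_def fun_eq_iff)

lemma is_comp_Cons: "is_comp (a # u) \<longleftrightarrow> a \<noteq> Nt 0 \<and> is_comp u"
  by (auto simp: is_comp_def)

lemma comp_tl: "is_comp u \<Longrightarrow> is_comp (tl u)"
  by (cases u) (auto simp: is_comp_Cons)

lemma comp_hd: "is_comp u \<Longrightarrow> u \<noteq> [] \<Longrightarrow> hd u \<noteq> Nt 0"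
  by (cases u) (auto simp: is_comp_Cons)

lemma conv_dl:
  assumes "is_comp u" "is_comp v" "is_comp g"
  shows "conv (dl u) (dl v :: ntil list \<Rightarrow> 'k::comm_ring_1) g = qs u v g"
  using assms
proof (induction g arbitrary: u v)
  case Nil
  then show ?case
    by (cases u; cases v) (auto simp: conv_Nil dl_def pre_def)
next
  case (Cons x g)
  have x0: "x \<noteq> Nt 0" and cg: "is_comp g" using Cons.prems by (auto simp: is_comp_Cons)
  define T where "T p = (conv (shc (dl u) (fst p)) (shc (dl v) (snd p)) g :: 'k)" for p
  define R where "R = {p\<in>splits x. fst p \<noteq> Nt 0 \<and> snd p \<noteq> Nt 0}"
  have spl: "splits x = insert (x, Nt 0) (insert (Nt 0, x) R)"
  proof (rule set_eqI)
    fix p :: "ntil \<times> ntil"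
    obtain a b where p: "p = (a, b)" by (cases p)
    show "p \<in> splits x \<longleftrightarrow> p \<in> insert (x, Nt 0) (insert (Nt 0, x) R)"
      using x0 unfolding p R_def splits_def
      by (cases a; cases b; cases x) auto
  qed
  have fR: "finite R" using finite_splits by (simp add: R_def)
  have nR: "(x, Nt 0) \<notin> R" "(Nt 0, x) \<notin> R" by (auto simp: R_def)
  have ne: "(x, Nt 0) \<noteq> (Nt 0, x)" using x0 by simp
  have IH: "conv (dl u') (dl v' :: ntil list \<Rightarrow> 'k) g = qs u' v' g" if "is_comp u'" "is_comp v'" for u' v'
    using Cons.IH[OF that cg] .
  have T1: "T (x, Nt 0) = (if u \<noteq> [] \<and> hd u = x then qs (tl u) v g else 0)"
    using x0 IH[OF comp_tl[OF Cons.prems(1)] Cons.prems(2)]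
    by (simp add: T_def shc_dl conv_zero1)
  have T2: "T (Nt 0, x) = (if v \<noteq> [] \<and> hd v = x then qs u (tl v) g else 0)"
    using x0 IH[OF Cons.prems(1) comp_tl[OF Cons.prems(2)]]
    by (simp add: T_def shc_dl conv_zero2)
  have T3: "sum T R = (if u \<noteq> [] \<and> v \<noteq> [] \<and> tadd (hd u) (hd v) = x then qs (tl u) (tl v) g else 0)"
  proof -
    have "sum T R = (\<Sum>p\<in>R. if p = (hd u, hd v) then (if u \<noteq> [] \<and> v \<noteq> [] then qs (tl u) (tl v) g else 0) else 0)"
    proof (rule sum.cong[OF refl])
      fix p assume "p \<in> R"
      then have "fst p \<noteq> Nt 0" "snd p \<noteq> Nt 0" by (auto simp: R_def)
      then show "T p = (if p = (hd u, hd v) then (if u \<noteq> [] \<and> v \<noteq> [] then qs (tl u) (tl v) g else 0) else 0)"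
        using IH[OF comp_tl[OF Cons.prems(1)] comp_tl[OF Cons.prems(2)]]
        by (cases p) (auto simp: T_def shc_dl conv_zero1 conv_zero2)
    qed
    also have "\<dots> = (if u \<noteq> [] \<and> v \<noteq> [] \<and> tadd (hd u) (hd v) = x then qs (tl u) (tl v) g else 0)"
      apply (simp only: sum.delta[OF fR])
      using comp_hd[OF Cons.prems(1)] comp_hd[OF Cons.prems(2)]
      by (auto simp: R_def splits_def)
    finally show ?thesis .
  qed
  have "conv (dl u) (dl v) (x # g) = T (x, Nt 0) + T (Nt 0, x) + sum T R"
    unfolding conv_Cons T_def[symmetric] spl using fR nR ne by (simp add: add.assoc)
  also have "\<dots> = qs u v (x # g)"
    unfolding T1 T2 T3
    by (cases u; cases v) (auto simp: dl_def pre_def)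
  finally show ?case .
qed

definition W :: "ntil list \<Rightarrow> nat" where "W g = sum_list (map nval g)"

lemma ell_Cons: "ell_eps (a # g) = (if a = Eps then Suc (ell_eps g) else ell_eps g)"
  by (simp add: ell_eps_def)
lemma bar_Cons: "bar (a # g) = (if a = Eps then bar g else a # bar g)"
  by (simp add: bar_def)
lemma ell_Nil [simp]: "ell_eps [] = 0" by (simp add: ell_eps_def)
lemma bar_Nil [simp]: "bar [] = []" by (simp add: bar_def)

lemma pre_nz: "pre a F g \<noteq> 0 \<Longrightarrow> \<exists>g'. g = a # g' \<and> F g' \<noteq> 0"
  by (cases g) (auto simp: pre_def split: if_splits)

lemma tadd_Eps: "tadd a b = Eps \<Longrightarrow> a = Eps \<or> b = Eps"
  by (cases a; cases b) (auto split: if_splits)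

lemma qs_supp:
  "qs u v g \<noteq> (0::'k::comm_ring_1) \<Longrightarrow> length g \<le> length u + length v \<and> W g = W u + W v
     \<and> ell_eps g \<le> ell_eps u + ell_eps v \<and> (is_comp u \<longrightarrow> is_comp v \<longrightarrow> is_comp g)"
proof (induction u v arbitrary: g rule: qs.induct)
  case (1 v)
  then show ?case by (simp add: dl_def W_def split: if_splits)
next
  case (2 a u)
  then show ?case by (simp add: dl_def W_def split: if_splits)
next
  case (3 a u b v)
  have "pre a (qs u (b # v)) g \<noteq> (0::'k) \<or> pre b (qs (a # u) v) g \<noteq> (0::'k) \<or> pre (tadd a b) (qs u v) g \<noteq> (0::'k)"
  proof (rule ccontr)
    assume "\<not> ?thesis"
    then have "pre a (qs u (b # v)) g = (0::'k)" "pre b (qs (a # u) v) g = (0::'k)" "pre (tadd a b) (qs u v) g = (0::'k)"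
      by auto
    then show False using "3.prems" by simp
  qed
  then show ?case
  proof (elim disjE)
    assume "pre a (qs u (b # v)) g \<noteq> (0::'k)"
    then obtain g' where "g = a # g'" "qs u (b # v) g' \<noteq> (0::'k)" using pre_nz by blast
    then show ?thesis using "3.IH"(1)[of g'] by (auto simp: W_def ell_Cons is_comp_Cons)
  next
    assume "pre b (qs (a # u) v) g \<noteq> (0::'k)"
    then obtain g' where "g = b # g'" "qs (a # u) v g' \<noteq> (0::'k)" using pre_nz by blast
    then show ?thesis using "3.IH"(2)[of g'] by (auto simp: W_def ell_Cons is_comp_Cons)
  next
    assume "pre (tadd a b) (qs u v) g \<noteq> (0::'k)"
    then obtain g' where g: "g = tadd a b # g'" "qs u v g' \<noteq> (0::'k)" using pre_nz by blast
    have "ell_eps g \<le> ell_eps (a # u) + ell_eps (b # v)"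
      using "3.IH"(3)[OF g(2)] tadd_Eps[of a b] by (auto simp: g ell_Cons)
    then show ?thesis using "3.IH"(3)[OF g(2)] g(1)
      by (auto simp: W_def nval_tadd is_comp_Cons tadd_zero_iff)
  qed
qed

lemma finite_supp_qs: "finite {g. qs u v g \<noteq> 0}"
proof -
  let ?N = "W u + W v"
  let ?A = "insert Eps (Nt ` {..?N})"
  have "{g. qs u v g \<noteq> 0} \<subseteq> {g. set g \<subseteq> ?A \<and> length g \<le> length u + length v}"
  proof
    fix g assume "g \<in> {g. qs u v g \<noteq> 0}"
    then have h: "length g \<le> length u + length v" "W g = ?N" using qs_supp by auto
    have "x \<in> ?A" if "x \<in> set g" for x
    proof -
      have "nval x \<le> W g" unfolding W_def using that by (simp add: member_le_sum_list)
      then show ?thesis using h by (cases x) auto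
    qed
    then show "g \<in> {g. set g \<subseteq> ?A \<and> length g \<le> length u + length v}" using h by auto
  qed
  moreover have "finite {g. set g \<subseteq> ?A \<and> length g \<le> length u + length v}"
    by (rule finite_lists_length_le) auto
  ultimately show ?thesis by (rule finite_subset)
qed

definition J :: "ntil list \<Rightarrow> ntil list \<Rightarrow> 'k::comm_ring_1" where
  "J g w = (if w = bar g then (-1) ^ ell_eps g else 0)"

definition K :: "ntil list \<Rightarrow> ntil list \<Rightarrow> 'k::comm_ring_1" where
  "K g w = (if g = [] \<or> hd g \<noteq> Eps then J g w else 0)"

definition SumT :: "(ntil list \<Rightarrow> ntil list \<Rightarrow> 'k::comm_ring_1) \<Rightarrow> (ntil list \<Rightarrow> 'k) \<Rightarrow> ntil list \<Rightarrow> 'k" where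
  "SumT T F w = (\<Sum>g\<in>{g. F g \<noteq> 0}. F g * T g w)"

lemma SumT_U:
  assumes "finite U" "{g. F g \<noteq> 0} \<subseteq> U"
  shows "SumT T F w = (\<Sum>g\<in>U. F g * T g w)"
  unfolding SumT_def by (rule sum.mono_neutral_left) (use assms in auto)

lemma SumT_add:
  assumes "finite {g. F g \<noteq> 0}" "finite {g. G g \<noteq> 0}"
  shows "SumT T (\<lambda>g. F g + G g) w = SumT T F w + SumT T G w"
proof -
  let ?U = "{g. F g \<noteq> 0} \<union> {g. G g \<noteq> 0}"
  have "SumT T (\<lambda>g. F g + G g) w = (\<Sum>g\<in>?U. (F g + G g) * T g w)"
    by (rule SumT_U) (use assms in auto)
  also have "\<dots> = (\<Sum>g\<in>?U. F g * T g w) + (\<Sum>g\<in>?U. G g * T g w)"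
    by (simp add: distrib_right sum.distrib)
  also have "\<dots> = SumT T F w + SumT T G w"
    using SumT_U[of ?U F T w] SumT_U[of ?U G T w] assms by auto
  finally show ?thesis .
qed

lemma supp_pre: "{g. pre a F g \<noteq> 0} = Cons a ` {g. F g \<noteq> 0}"
proof (rule set_eqI)
  fix g show "g \<in> {g. pre a F g \<noteq> 0} \<longleftrightarrow> g \<in> Cons a ` {g. F g \<noteq> 0}"
    by (cases g) (auto simp: pre_def)
qed

lemma finite_supp_pre: "finite {g. F g \<noteq> 0} \<Longrightarrow> finite {g. pre a F g \<noteq> 0}"
  by (simp add: supp_pre)

lemma SumT_pre: "SumT T (pre a F) w = SumT (\<lambda>g. T (a # g)) F w"
proof -
  have "SumT T (pre a F) w = (\<Sum>g\<in>Cons a ` {g. F g \<noteq> 0}. pre a F g * T g w)"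
    by (simp add: SumT_def supp_pre)
  also have "\<dots> = (\<Sum>g\<in>{g. F g \<noteq> 0}. pre a F (a # g) * T (a # g) w)"
    by (subst sum.reindex) (auto simp: inj_on_def)
  also have "\<dots> = SumT (\<lambda>g. T (a # g)) F w" by (simp add: SumT_def pre_def)
  finally show ?thesis .
qed

lemma SumT_dl: "SumT T (dl u) w = T u w"
  by (simp add: SumT_def dl_def)

lemma J_Eps: "J (Eps # g) w = - J g w"
  by (simp add: J_def bar_Cons ell_Cons)

lemma J_real: "a \<noteq> Eps \<Longrightarrow> J (a # g) w = pre a (J g) w"
  by (cases w) (auto simp: J_def bar_Cons ell_Cons pre_def)

lemma SumT_J_pre_Eps: "SumT J (pre Eps F) w = - SumT J F w"
  by (simp only: SumT_pre) (simp add: J_Eps SumT_def sum_negf)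

lemma pre_sum: "pre a (\<lambda>w. \<Sum>g\<in>S. f g w) w = (\<Sum>g\<in>S. pre a (f g) w)"
  by (cases w) (auto simp: pre_def)

lemma SumT_J_pre: "a \<noteq> Eps \<Longrightarrow> SumT J (pre a F) w = pre a (SumT J F) w"
proof -
  assume a: "a \<noteq> Eps"
  have "SumT J (pre a F) w = (\<Sum>g\<in>{g. F g \<noteq> 0}. F g * pre a (J g) w)"
    by (simp only: SumT_pre) (simp add: J_real[OF a] SumT_def)
  also have "\<dots> = pre a (SumT J F) w"
    unfolding SumT_def by (cases w) (auto simp: pre_def)
  finally show ?thesis .
qed

lemma SumT_K_pre_Eps: "SumT K (pre Eps F) w = 0"
  by (simp only: SumT_pre) (simp add: K_def SumT_def)

lemma SumT_K_pre: "a \<noteq> Eps \<Longrightarrow> SumT K (pre a F) w = SumT J (pre a F) w"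
  by (simp only: SumT_pre) (simp add: K_def SumT_def)

lemma pre_scale: "pre a (\<lambda>w. c * F w) w = c * pre a F w"
  by (cases w) (auto simp: pre_def)

lemma pre_neg: "pre a (\<lambda>w. - F w) w = - pre a F w"
  by (cases w) (auto simp: pre_def)

lemma finite_supp_add:
  "finite {g. F g \<noteq> 0} \<Longrightarrow> finite {g. G g \<noteq> (0::'k::comm_ring_1)} \<Longrightarrow> finite {g. F g + G g \<noteq> 0}"
  by (rule finite_subset[of _ "{g. F g \<noteq> 0} \<union> {g. G g \<noteq> 0}"]) auto

lemma SumT_qs3:
  fixes T :: "ntil list \<Rightarrow> ntil list \<Rightarrow> 'k::comm_ring_1"
  shows "SumT T (qs (a # u) (b # v)) w =
    SumT T (pre a (qs u (b # v))) w + SumT T (pre b (qs (a # u) v)) w + SumT T (pre (tadd a b) (qs u v)) w"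
proof -
  have f1: "finite {g. pre a (qs u (b # v)) g \<noteq> (0::'k)}" by (rule finite_supp_pre[OF finite_supp_qs])
  have f2: "finite {g. pre b (qs (a # u) v) g \<noteq> (0::'k)}" by (rule finite_supp_pre[OF finite_supp_qs])
  have f3: "finite {g. pre (tadd a b) (qs u v) g \<noteq> (0::'k)}" by (rule finite_supp_pre[OF finite_supp_qs])
  have "SumT T (qs (a # u) (b # v)) w = SumT T (\<lambda>g. (pre a (qs u (b # v)) g + pre b (qs (a # u) v) g) + pre (tadd a b) (qs u v) g) w"
    by simp
  also have "\<dots> = SumT T (\<lambda>g. pre a (qs u (b # v)) g + pre b (qs (a # u) v) g) w + SumT T (pre (tadd a b) (qs u v)) w"
    by (rule SumT_add[OF finite_supp_add[OF f1 f2] f3])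
  also have "\<dots> = SumT T (pre a (qs u (b # v))) w + SumT T (pre b (qs (a # u) v)) w + SumT T (pre (tadd a b) (qs u v)) w"
    by (simp add: SumT_add[OF f1 f2])
  finally show ?thesis .
qed

lemma tadd_Eps_real: "b \<noteq> Eps \<Longrightarrow> b \<noteq> Nt 0 \<Longrightarrow> tadd Eps b = b"
  by (cases b) auto
lemma tadd_real_Eps: "b \<noteq> Eps \<Longrightarrow> b \<noteq> Nt 0 \<Longrightarrow> tadd b Eps = b"
  by (cases b) auto
lemma tadd_real_real: "a \<noteq> Eps \<Longrightarrow> b \<noteq> Eps \<Longrightarrow> tadd a b \<noteq> Eps"
  by (cases a; cases b) auto

lemma qs_J:
  "is_comp u \<Longrightarrow> is_comp v \<Longrightarrow>
   SumT J (qs u v :: ntil list \<Rightarrow> 'k::comm_ring_1) w = (-1) ^ (ell_eps u + ell_eps v) * qs (bar u) (bar v) w"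
proof (induction u v arbitrary: w rule: qs.induct)
  case (1 v)
  then show ?case by (simp only: qs.simps(1) SumT_dl) (simp add: J_def dl_def)
next
  case (2 a u)
  then show ?case by (simp only: qs_Nil2 SumT_dl) (simp add: J_def dl_def)
next
  case (3 a u b v)
  have cu: "is_comp u" and cv: "is_comp v" and a0: "a \<noteq> Nt 0" and b0: "b \<noteq> Nt 0"
    using "3.prems" by (auto simp: is_comp_Cons)
  define s :: 'k where "s = (-1) ^ (ell_eps u + ell_eps v)"
  have IH1: "SumT J (qs u (b # v) :: ntil list \<Rightarrow> 'k) = (\<lambda>w. (-1) ^ (ell_eps u + ell_eps (b # v)) * qs (bar u) (bar (b # v)) w)"
    using "3.IH"(1)[OF cu "3.prems"(2)] by blast
  have IH2: "SumT J (qs (a # u) v :: ntil list \<Rightarrow> 'k) = (\<lambda>w. (-1) ^ (ell_eps (a # u) + ell_eps v) * qs (bar (a # u)) (bar v) w)"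
    using "3.IH"(2)[OF "3.prems"(1) cv] by blast
  have IH3: "SumT J (qs u v :: ntil list \<Rightarrow> 'k) = (\<lambda>w. s * qs (bar u) (bar v) w)"
    using "3.IH"(3)[OF cu cv] unfolding s_def by blast
  have gen: "SumT J (pre c F) w = (if c = Eps then - SumT J F w else pre c (SumT J F) w)"
    for c and F :: "ntil list \<Rightarrow> 'k"
    by (simp add: SumT_J_pre_Eps SumT_J_pre)
  show ?case
  proof (cases "a = Eps")
    case aE: True
    show ?thesis
    proof (cases "b = Eps")
      case bE: True
      show ?thesis unfolding SumT_qs3 gen IH1 IH2 IH3
        using aE bE by (simp add: ell_Cons bar_Cons s_def)
    next
      case bR: False
      show ?thesis unfolding SumT_qs3 gen IH1 IH2 IH3
        using aE bR b0 by (simp add: ell_Cons bar_Cons s_def tadd_Eps_real pre_scale pre_neg)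
    qed
  next
    case aR: False
    show ?thesis
    proof (cases "b = Eps")
      case bE: True
      show ?thesis unfolding SumT_qs3 gen IH1 IH2 IH3
        using aR bE a0 by (simp add: ell_Cons bar_Cons s_def tadd_real_Eps pre_scale pre_neg)
    next
      case bR: False
      have "tadd a b \<noteq> Eps" using aR bR by (rule tadd_real_real)
      then show ?thesis unfolding SumT_qs3 gen IH1 IH2 IH3
        using aR bR by (simp add: ell_Cons bar_Cons s_def pre_scale) (simp add: distrib_left)
    qed
  qed
qed

lemma qs_K:
  assumes "is_comp u" "is_comp v"
  shows "SumT K (qs u v :: ntil list \<Rightarrow> 'k::comm_ring_1) w =
    (if (u = [] \<or> hd u \<noteq> Eps) \<and> (v = [] \<or> hd v \<noteq> Eps)
     then (-1) ^ (ell_eps u + ell_eps v) * qs (bar u) (bar v) w else 0)"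
proof (cases u)
  case Nil
  then show ?thesis by (simp only: qs.simps(1) SumT_dl) (simp add: K_def J_def dl_def)
next
  case (Cons a u')
  note uu = Cons
  show ?thesis
  proof (cases v)
    case Nil
    then show ?thesis using uu by (simp only: qs_Nil2 SumT_dl) (simp add: K_def J_def dl_def)
  next
    case (Cons b v')
    have cu: "is_comp u'" and cv: "is_comp v'" and a0: "a \<noteq> Nt 0" and b0: "b \<noteq> Nt 0"
      using assms uu Cons by (auto simp: is_comp_Cons)
    have genK: "SumT K (pre c F) w = (if c = Eps then 0 else SumT J (pre c F) w)"
      for c and F :: "ntil list \<Rightarrow> 'k"
      by (simp add: SumT_K_pre_Eps SumT_K_pre)
    have gen: "SumT J (pre c F) w = (if c = Eps then - SumT J F w else pre c (SumT J F) w)"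
      for c and F :: "ntil list \<Rightarrow> 'k"
      by (simp add: SumT_J_pre_Eps SumT_J_pre)
    have QJ: "SumT J (qs x y :: ntil list \<Rightarrow> 'k) = (\<lambda>w. (-1) ^ (ell_eps x + ell_eps y) * qs (bar x) (bar y) w)"
      if "is_comp x" "is_comp y" for x y using qs_J[OF that] by blast
    have cE: "is_comp (Eps # x)" if "is_comp x" for x using that by (simp add: is_comp_Cons)
    have cb: "is_comp (b # v')" and ca: "is_comp (a # u')" using assms uu Cons by auto
    show ?thesis
    proof (cases "a = Eps")
      case aE: True
      show ?thesis
      proof (cases "b = Eps")
        case True then show ?thesis unfolding uu Cons SumT_qs3 genK using aE by simp
      next
        case bR: False
         have "SumT K (qs u v :: ntil list \<Rightarrow> 'k) w = pre b (SumT J (qs (Eps # u') v')) w + pre b (SumT J (qs u' v')) w"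
          unfolding uu Cons SumT_qs3 genK using aE bR b0 by (simp add: gen tadd_Eps_real)
        also have "\<dots> = 0"
          unfolding QJ[OF cE[OF cu] cv] QJ[OF cu cv]
          by (simp add: ell_Cons bar_Cons pre_scale pre_neg)
        finally show ?thesis using aE uu by simp
      qed
    next
      case aR: False
      show ?thesis
      proof (cases "b = Eps")
        case bE: True
         have "SumT K (qs u v :: ntil list \<Rightarrow> 'k) w = pre a (SumT J (qs u' (Eps # v'))) w + pre a (SumT J (qs u' v')) w"
          unfolding uu Cons SumT_qs3 genK using bE aR a0 by (simp add: gen tadd_real_Eps)
        also have "\<dots> = 0"
          unfolding QJ[OF cu cE[OF cv]] QJ[OF cu cv]
          by (simp add: ell_Cons bar_Cons pre_scale pre_neg)
        finally show ?thesis using bE Cons by simp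
      next
        case bR: False
        have "tadd a b \<noteq> Eps" using aR bR by (rule tadd_real_real)
        then  have "SumT K (qs u v :: ntil list \<Rightarrow> 'k) w = SumT J (qs u v) w"
          unfolding uu Cons SumT_qs3 genK using aR bR by simp
        then show ?thesis using qs_J[OF assms, of w] aR bR uu Cons by simp
      qed
    qed
  qed
qed

lemma set_sl: "set (sorted_list_of_set A) \<subseteq> A"
  by (cases "finite A") auto

lemma comp_nzvals: "is_comp (nzvals h)"
proof -
  have "Nt 0 \<notin> h ` set (sorted_list_of_set {i. h i \<noteq> Nt 0})"
  proof
    assume "Nt 0 \<in> h ` set (sorted_list_of_set {i. h i \<noteq> Nt 0})"
    then obtain x where x: "x \<in> set (sorted_list_of_set {i. h i \<noteq> Nt 0})" "Nt 0 = h x" by (rule imageE)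
    have "x \<in> {i. h i \<noteq> Nt 0}" using set_sl x(1) by (rule subsetD)
    then show False using x(2) by simp
  qed
  then show ?thesis unfolding is_comp_def nzvals_def by simp
qed

lemma ser_cong: "(\<And>g. is_comp g \<Longrightarrow> c g = d g) \<Longrightarrow> ser c = ser d"
  by (auto simp: ser_def fun_eq_iff comp_nzvals)

lemma Mser_ser: "Mser a = ser (dl a)"
  by (auto simp: Mser_def ser_def dl_def fun_eq_iff)

lemma ser_sum:
  assumes "finite S"
  shows "(\<lambda>h. \<Sum>a\<in>S. c a * Mser a h) = ser (\<lambda>g. if g \<in> S then c g else 0)"
  using assms by (auto simp: Mser_def ser_def fun_eq_iff if_distrib[of "\<lambda>x. _ * x"] sum.delta cong: if_cong)

lemma ser_restrict: "finite {g. c g \<noteq> 0} \<Longrightarrow> ser c = ser (\<lambda>g. if g \<in> {g. c g \<noteq> 0 \<and> is_comp g} then c g else 0)"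
  by (rule ser_cong) auto


lemma WCQSym_iff: "x \<in> WCQSym \<longleftrightarrow> (\<exists>c. finite {g. c g \<noteq> 0} \<and> (\<forall>g. c g \<noteq> 0 \<longrightarrow> is_comp g) \<and> x = ser c)"
proof
  assume "x \<in> WCQSym"
  then obtain S c where S: "finite S" "\<forall>a\<in>S. is_comp a" "x = (\<lambda>h. \<Sum>a\<in>S. c a * Mser a h)"
    by (auto simp: WCQSym_def)
  then have "x = ser (\<lambda>g. if g \<in> S then c g else 0)" using ser_sum by blast
  moreover have "finite {g. (if g \<in> S then c g else 0) \<noteq> 0}"
    by (rule finite_subset[OF _ S(1)]) (auto split: if_splits)
  ultimately show "\<exists>c. finite {g. c g \<noteq> 0} \<and> (\<forall>g. c g \<noteq> 0 \<longrightarrow> is_comp g) \<and> x = ser c"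
    using S(2) by (intro exI[of _ "\<lambda>g. if g \<in> S then c g else 0"]) (auto split: if_splits)
next
  assume "\<exists>c. finite {g. c g \<noteq> 0} \<and> (\<forall>g. c g \<noteq> 0 \<longrightarrow> is_comp g) \<and> x = ser c"
  then obtain c where c: "finite {g. c g \<noteq> 0}" "\<forall>g. c g \<noteq> 0 \<longrightarrow> is_comp g" "x = ser c" by blast
  let ?S = "{g. c g \<noteq> 0}"
  have "x = (\<lambda>h. \<Sum>a\<in>?S. c a * Mser a h)"
    unfolding ser_sum[OF c(1)] c(3) by (rule ser_cong) auto
  then show "x \<in> WCQSym" unfolding WCQSym_def using c by blast
qed

lemma sadd_ser: "sadd (ser c) (ser d) = ser (\<lambda>g. c g + d g)"
  by (auto simp: sadd_def ser_def fun_eq_iff)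
lemma sscale_ser: "sscale k (ser c) = ser (\<lambda>g. k * c g)"
  by (auto simp: sscale_def ser_def fun_eq_iff)
lemma szero_ser: "szero = ser (\<lambda>g. 0)"
  by (auto simp: szero_def ser_def fun_eq_iff)


lemma conv_bilin:
  assumes "finite S" "finite T"
  shows "conv (\<lambda>x. \<Sum>a\<in>S. c a * e a x) (\<lambda>x. \<Sum>b\<in>T. d b * f b x) g
     = (\<Sum>a\<in>S. \<Sum>b\<in>T. c a * d b * conv (e a) (f b) g)"
proof -
  have "conv (\<lambda>x. \<Sum>a\<in>S. c a * e a x) (\<lambda>x. \<Sum>b\<in>T. d b * f b x) g
     = (\<Sum>s\<in>seqs g. \<Sum>a\<in>S. \<Sum>b\<in>T. c a * d b * (e a (nz (map fst s)) * f b (nz (map snd s))))"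
    unfolding conv_def
  proof (rule sum.cong[OF refl])
    fix s
    show "(\<Sum>a\<in>S. c a * e a (nz (map fst s))) * (\<Sum>b\<in>T. d b * f b (nz (map snd s))) =
      (\<Sum>a\<in>S. \<Sum>b\<in>T. c a * d b * (e a (nz (map fst s)) * f b (nz (map snd s))))"
      unfolding sum_product by (rule sum.cong[OF refl], rule sum.cong[OF refl]) (simp only: ac_simps)
  qed
  also have "\<dots> = (\<Sum>a\<in>S. \<Sum>s\<in>seqs g. \<Sum>b\<in>T. c a * d b * (e a (nz (map fst s)) * f b (nz (map snd s))))"
    by (rule sum.swap)
  also have "\<dots> = (\<Sum>a\<in>S. \<Sum>b\<in>T. \<Sum>s\<in>seqs g. c a * d b * (e a (nz (map fst s)) * f b (nz (map snd s))))"
    by (rule sum.cong[OF refl]) (rule sum.swap)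
  also have "\<dots> = (\<Sum>a\<in>S. \<Sum>b\<in>T. c a * d b * conv (e a) (f b) g)"
    by (simp add: conv_def sum_distrib_left)
  finally show ?thesis .
qed

lemma fun_as_sum:
  assumes "finite S" "{g. c g \<noteq> 0} \<subseteq> S"
  shows "c = (\<lambda>x. \<Sum>a\<in>S. c a * dl a x)"
proof
  fix x show "c x = (\<Sum>a\<in>S. c a * dl a x)"
  proof -
    have "(\<Sum>a\<in>S. c a * dl a x) = (\<Sum>a\<in>S. if a = x then c a else 0)"
      by (rule sum.cong[OF refl]) (simp add: dl_def)
    also have "\<dots> = (if x \<in> S then c x else 0)" using assms(1) by (simp add: sum.delta')
    also have "\<dots> = c x" using assms(2) by auto
    finally show ?thesis by simp
  qed
qed

lemma conv_fs:
  fixes c d :: "ntil list \<Rightarrow> 'k::comm_ring_1"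
  assumes "finite S" "{g. c g \<noteq> 0} \<subseteq> S" "\<forall>a\<in>S. is_comp a"
    and "finite T" "{g. d g \<noteq> 0} \<subseteq> T" "\<forall>a\<in>T. is_comp a" and "is_comp g"
  shows "conv c d g = (\<Sum>a\<in>S. \<Sum>b\<in>T. c a * d b * qs a b g)"
proof -
  have "conv c d g = conv (\<lambda>x. \<Sum>a\<in>S. c a * dl a x) (\<lambda>x. \<Sum>b\<in>T. d b * dl b x) g"
    by (rule arg_cong2[where f="\<lambda>x y. conv x y g", OF fun_as_sum[OF assms(1,2)] fun_as_sum[OF assms(4,5)]])
  also have "\<dots> = (\<Sum>a\<in>S. \<Sum>b\<in>T. c a * d b * conv (dl a) (dl b) g)"
    by (rule conv_bilin[OF assms(1,4)])
  also have "\<dots> = (\<Sum>a\<in>S. \<Sum>b\<in>T. c a * d b * qs a b g)"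
    using assms(3,6,7) by (auto simp: conv_dl intro!: sum.cong)
  finally show ?thesis .
qed

lemma conv_scale: "conv (\<lambda>x. s * F x) (\<lambda>x. t * G x) g = s * t * conv F G g"
  by (simp add: conv_def sum_distrib_left algebra_simps)

definition lead :: "ntil list \<Rightarrow> nat" where
  "lead g = length (takeWhile (\<lambda>x. x \<noteq> Eps) g)"

lemma lead_Cons: "lead (x # g) = (if x = Eps then 0 else Suc (lead g))"
  by (simp add: lead_def)

lemma ell_append: "ell_eps (u @ v) = ell_eps u + ell_eps v"
  by (simp add: ell_eps_def)

lemma ell_noEps: "Eps \<notin> set u \<Longrightarrow> ell_eps u = 0"
  by (simp add: ell_eps_def filter_empty_conv) (metis)

lemma qs_Eps_struct:
  assumes "is_comp u" "Eps \<notin> set u"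
  shows "qs u (Eps # w) (u @ Eps # w) = (1::'k::comm_ring_1)
     \<and> (\<forall>g. qs u (Eps # w) g \<noteq> (0::'k) \<longrightarrow> g = u @ Eps # w \<or> ell_eps g \<le> ell_eps w \<or> lead g < length u)"
  using assms
proof (induction u)
  case Nil
  then show ?case by (simp add: dl_def)
next
  case (Cons a u')
  have a: "a \<noteq> Eps" "a \<noteq> Nt 0" and cu: "is_comp u'" "Eps \<notin> set u'"
    using Cons.prems by (auto simp: is_comp_Cons)
  have ta: "tadd a Eps = a" using a by (rule tadd_real_Eps)
  note IH = Cons.IH[OF cu]
  have e: "qs (a # u') (Eps # w) = (\<lambda>g. pre a (qs u' (Eps # w)) g + pre Eps (qs (a # u') w) g + pre a (qs u' w) g :: 'k)"
    using ta by simp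
  have z: "qs u' w (u' @ Eps # w) = (0::'k)"
  proof (rule ccontr)
    assume "qs u' w (u' @ Eps # w) \<noteq> (0::'k)"
    then have "ell_eps (u' @ Eps # w) \<le> ell_eps u' + ell_eps w" using qs_supp by blast
    then show False by (simp add: ell_append ell_Cons)
  qed
  have part1: "qs (a # u') (Eps # w) ((a # u') @ Eps # w) = (1::'k)"
    unfolding e using IH a z by (simp add: pre_def)
  have part2: "g = (a # u') @ Eps # w \<or> ell_eps g \<le> ell_eps w \<or> lead g < length (a # u')"
    if nz0: "qs (a # u') (Eps # w) g \<noteq> (0::'k)" for g
  proof -
    have "pre a (qs u' (Eps # w)) g \<noteq> (0::'k) \<or> pre Eps (qs (a # u') w) g \<noteq> (0::'k) \<or> pre a (qs u' w) g \<noteq> (0::'k)"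
    proof (rule ccontr)
      assume "\<not> ?thesis"
      then have "pre a (qs u' (Eps # w)) g = (0::'k)" "pre Eps (qs (a # u') w) g = (0::'k)" "pre a (qs u' w) g = (0::'k)"
        by auto
      then show False using nz0 unfolding e by simp
    qed
    then show ?thesis
    proof (elim disjE)
      assume "pre a (qs u' (Eps # w)) g \<noteq> (0::'k)"
      then obtain g' where g: "g = a # g'" "qs u' (Eps # w) g' \<noteq> (0::'k)" using pre_nz by blast
      then show ?thesis using IH a by (auto simp: ell_Cons lead_Cons)
    next
      assume "pre Eps (qs (a # u') w) g \<noteq> (0::'k)"
      then obtain g' where g: "g = Eps # g'" using pre_nz by blast
      then show ?thesis by (simp add: lead_Cons)
    next
      assume "pre a (qs u' w) g \<noteq> (0::'k)"
      then obtain g' where g: "g = a # g'" "qs u' w g' \<noteq> (0::'k)" using pre_nz by blast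
      then have "ell_eps g' \<le> ell_eps u' + ell_eps w" using qs_supp by blast
      then show ?thesis using g a ell_noEps[OF cu(2)] by (simp add: ell_Cons)
    qed
  qed
  show ?case using part1 part2 by blast
qed

lemma W_ser: "finite {g. c g \<noteq> 0} \<Longrightarrow> (\<forall>g. c g \<noteq> 0 \<longrightarrow> is_comp g) \<Longrightarrow> ser c \<in> WCQSym"
  using WCQSym_iff by blast

lemma Mser_W: "is_comp a \<Longrightarrow> Mser a \<in> WCQSym"
  unfolding Mser_ser by (rule W_ser) (auto simp: dl_def)

lemma szero_W: "szero \<in> WCQSym"
  unfolding szero_ser by (rule W_ser) auto

lemma sadd_W: "x \<in> WCQSym \<Longrightarrow> y \<in> WCQSym \<Longrightarrow> sadd x y \<in> WCQSym"
proof -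
  assume "x \<in> WCQSym" "y \<in> WCQSym"
  then obtain c d where c: "finite {g. c g \<noteq> 0}" "\<forall>g. c g \<noteq> 0 \<longrightarrow> is_comp g" "x = ser c"
    and d: "finite {g. d g \<noteq> 0}" "\<forall>g. d g \<noteq> 0 \<longrightarrow> is_comp g" "y = ser d"
    unfolding WCQSym_iff by blast
  show ?thesis unfolding c(3) d(3) sadd_ser
  proof (rule W_ser)
    show "finite {g. c g + d g \<noteq> 0}"
      by (rule finite_subset[of _ "{g. c g \<noteq> 0} \<union> {g. d g \<noteq> 0}"]) (use c d in auto)
    show "\<forall>g. c g + d g \<noteq> 0 \<longrightarrow> is_comp g"
    proof (intro allI impI)
      fix g assume "c g + d g \<noteq> 0"
      then have "c g \<noteq> 0 \<or> d g \<noteq> 0" by auto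
      then show "is_comp g" using c d by blast
    qed
  qed
qed

lemma sscale_W: "x \<in> WCQSym \<Longrightarrow> sscale k x \<in> WCQSym"
proof -
  assume "x \<in> WCQSym"
  then obtain c where c: "finite {g. c g \<noteq> 0}" "\<forall>g. c g \<noteq> 0 \<longrightarrow> is_comp g" "x = ser c"
    unfolding WCQSym_iff by blast
  show ?thesis unfolding c(3) sscale_ser
  proof (rule W_ser)
    show "finite {g. k * c g \<noteq> 0}"
      by (rule finite_subset[of _ "{g. c g \<noteq> 0}"]) (use c in auto)
    show "\<forall>g. k * c g \<noteq> 0 \<longrightarrow> is_comp g"
    proof (intro allI impI)
      fix g assume "k * c g \<noteq> 0"
      then have "c g \<noteq> 0" by auto
      then show "is_comp g" using c by blast
    qed
  qed
qed

definition QG :: "(ntil list \<Rightarrow> 'k::comm_ring_1) \<Rightarrow> (ntil list \<Rightarrow> 'k) \<Rightarrow> ntil list \<Rightarrow> 'k" where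
  "QG c d g = (\<Sum>a\<in>{g. c g \<noteq> 0}. \<Sum>b\<in>{g. d g \<noteq> 0}. c a * d b * qs a b g)"

lemma QG_props:
  fixes c d :: "ntil list \<Rightarrow> 'k::comm_ring_1"
  assumes c: "finite {g. c g \<noteq> 0}" "\<forall>g. c g \<noteq> 0 \<longrightarrow> is_comp g"
    and d: "finite {g. d g \<noteq> 0}" "\<forall>g. d g \<noteq> 0 \<longrightarrow> is_comp g"
  shows "smult (ser c) (ser d) = ser (QG c d)"
    and "{g. QG c d g \<noteq> 0} \<subseteq> (\<Union>a\<in>{g. c g \<noteq> 0}. \<Union>b\<in>{g. d g \<noteq> 0}. {g. qs a b g \<noteq> (0::'k)})"
    and "finite {g. QG c d g \<noteq> 0}"
    and "\<forall>g. QG c d g \<noteq> 0 \<longrightarrow> is_comp g"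
proof -
  show "smult (ser c) (ser d) = ser (QG c d)"
    unfolding smult_ser QG_def
    by (rule ser_cong, rule conv_fs) (use c d in auto)
  show sub: "{g. QG c d g \<noteq> 0} \<subseteq> (\<Union>a\<in>{g. c g \<noteq> 0}. \<Union>b\<in>{g. d g \<noteq> 0}. {g. qs a b g \<noteq> (0::'k)})"
  proof
    fix g assume "g \<in> {g. QG c d g \<noteq> 0}"
    then have "(\<Sum>a\<in>{g. c g \<noteq> 0}. \<Sum>b\<in>{g. d g \<noteq> 0}. c a * d b * qs a b g) \<noteq> 0" by (simp add: QG_def)
    then obtain a where a: "a \<in> {g. c g \<noteq> 0}" "(\<Sum>b\<in>{g. d g \<noteq> 0}. c a * d b * qs a b g) \<noteq> 0"
      by (meson sum.neutral)
    then obtain b where b: "b \<in> {g. d g \<noteq> 0}" "c a * d b * qs a b g \<noteq> 0"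
      by (meson sum.neutral)
    then have "qs a b g \<noteq> (0::'k)" by auto
    then show "g \<in> (\<Union>a\<in>{g. c g \<noteq> 0}. \<Union>b\<in>{g. d g \<noteq> 0}. {g. qs a b g \<noteq> (0::'k)})" using a b by blast
  qed
  show "finite {g. QG c d g \<noteq> 0}"
    by (rule finite_subset[OF sub]) (use c d finite_supp_qs in auto)
  show "\<forall>g. QG c d g \<noteq> 0 \<longrightarrow> is_comp g"
  proof (intro allI impI)
    fix g assume "QG c d g \<noteq> 0"
    then obtain a b where "c a \<noteq> 0" "d b \<noteq> 0" "qs a b g \<noteq> (0::'k)" using sub by blast
    then show "is_comp g" using c d qs_supp by blast
  qed
qed

lemma smult_W: "x \<in> WCQSym \<Longrightarrow> y \<in> WCQSym \<Longrightarrow> smult x y \<in> WCQSym"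
proof -
  assume "x \<in> WCQSym" "y \<in> WCQSym"
  then obtain c d where c: "finite {g. c g \<noteq> 0}" "\<forall>g. c g \<noteq> 0 \<longrightarrow> is_comp g" "x = ser c"
    and d: "finite {g. d g \<noteq> 0}" "\<forall>g. d g \<noteq> 0 \<longrightarrow> is_comp g" "y = ser d"
    unfolding WCQSym_iff by blast
  show ?thesis unfolding c(3) d(3) QG_props(1)[OF c(1,2) d(1,2)]
    by (rule W_ser[OF QG_props(3,4)[OF c(1,2) d(1,2)]])
qed

lemma comp_bar: "is_comp a \<Longrightarrow> is_comp (bar a)"
  by (auto simp: is_comp_def bar_def)

lemma K_eq: "K a = (\<lambda>x. (if a = [] \<or> hd a \<noteq> Eps then (-1) ^ ell_eps a else 0) * dl (bar a) x)"
  by (auto simp: K_def J_def dl_def fun_eq_iff)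

lemma conv_KK:
  assumes "is_comp a" "is_comp b" "is_comp w"
  shows "conv (K a) (K b) w = (if (a = [] \<or> hd a \<noteq> Eps) \<and> (b = [] \<or> hd b \<noteq> Eps)
     then (-1) ^ (ell_eps a + ell_eps b) * qs (bar a) (bar b) w else (0::'k::comm_ring_1))"
proof -
  have "conv (K a) (K b) w = (if a = [] \<or> hd a \<noteq> Eps then (-1) ^ ell_eps a else 0) *
      (if b = [] \<or> hd b \<noteq> Eps then (-1) ^ ell_eps b else 0) * conv (dl (bar a)) (dl (bar b) :: _ \<Rightarrow> 'k) w"
    unfolding K_eq by (rule conv_scale)
  also have "\<dots> = (if a = [] \<or> hd a \<noteq> Eps then (-1) ^ ell_eps a else 0) *
      (if b = [] \<or> hd b \<noteq> Eps then (-1) ^ ell_eps b else 0) * qs (bar a) (bar b) w"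
    by (subst conv_dl[OF comp_bar[OF assms(1)] comp_bar[OF assms(2)] assms(3)]) (rule refl)
  finally show ?thesis by (simp add: power_add)
qed

definition Bset :: "'k::comm_ring_1 ser set" where "Bset = {Mser \<alpha> | \<alpha>. \<alpha> \<in> C_eps}"
definition Iset :: "'k::comm_ring_1 ser set" where "Iset = gen_ideal WCQSym Bset"

lemma B_W: "Bset \<subseteq> WCQSym"
  by (auto simp: Bset_def C_eps_def intro: Mser_W)

lemma I_W: "Iset \<subseteq> WCQSym"
  unfolding Iset_def gen_ideal_def
  by (rule Inter_lower) (use B_W szero_W sadd_W smult_W in auto)

lemma I_B: "Bset \<subseteq> Iset" unfolding Iset_def gen_ideal_def by blast
lemma I_zero: "szero \<in> Iset" unfolding Iset_def gen_ideal_def by blast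
lemma I_add: "x \<in> Iset \<Longrightarrow> y \<in> Iset \<Longrightarrow> sadd x y \<in> Iset" unfolding Iset_def gen_ideal_def by blast
lemma I_mult: "a \<in> WCQSym \<Longrightarrow> x \<in> Iset \<Longrightarrow> smult a x \<in> Iset" unfolding Iset_def gen_ideal_def by blast

lemma I_scale: "x \<in> Iset \<Longrightarrow> sscale k x \<in> Iset"
proof -
  assume xI: "x \<in> Iset"
  then have "x \<in> WCQSym" using I_W by blast
  then obtain d where d: "finite {g. d g \<noteq> 0}" "\<forall>g. d g \<noteq> 0 \<longrightarrow> is_comp g" "x = ser d"
    unfolding WCQSym_iff by blast
  have "smult (sscale k (Mser [])) x = sscale k x"
  proof -
    have "smult (sscale k (Mser [])) x = ser (conv (\<lambda>g. k * dl [] g) d)"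
      unfolding Mser_ser sscale_ser d(3) smult_ser ..
    also have "\<dots> = ser (\<lambda>g. k * d g)"
    proof (rule ser_cong)
      fix g assume cg: "is_comp g"
      have "conv (\<lambda>g. k * dl [] g) d g = (\<Sum>a\<in>{[]}. \<Sum>b\<in>{g. d g \<noteq> 0}. (k * dl [] a) * d b * qs a b g)"
        by (rule conv_fs) (use d cg in \<open>auto simp: dl_def is_comp_def\<close>)
      also have "\<dots> = (\<Sum>b\<in>{g. d g \<noteq> 0}. k * d b * dl b g)" by (simp add: dl_def)
      also have "\<dots> = (\<Sum>b\<in>{g. d g \<noteq> 0}. if b = g then k * d b else 0)"
        by (rule sum.cong) (auto simp: dl_def)
      also have "\<dots> = k * d g" using d(1) by (simp add: sum.delta')
      finally show "conv (\<lambda>g. k * dl [] g) d g = k * d g" .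
    qed
    also have "\<dots> = sscale k x" unfolding d(3) sscale_ser ..
    finally show ?thesis .
  qed
  moreover have "smult (sscale k (Mser [])) x \<in> Iset"
    by (rule I_mult[OF sscale_W[OF Mser_W] xI]) (simp add: is_comp_def)
  ultimately show ?thesis by simp
qed

lemma I_sum: "finite S \<Longrightarrow> (\<forall>a\<in>S. X a \<in> Iset) \<Longrightarrow> (\<lambda>h. \<Sum>a\<in>S. e a * X a h) \<in> Iset"
proof (induction S rule: finite_induct)
  case empty
  then show ?case using I_zero by (simp add: szero_def)
next
  case (insert x F)
  have "(\<lambda>h. \<Sum>a\<in>insert x F. e a * X a h) = sadd (sscale (e x) (X x)) (\<lambda>h. \<Sum>a\<in>F. e a * X a h)"
    using insert by (simp add: sadd_def sscale_def)
  then show ?case by (simp only:) (intro I_add I_scale; use insert in auto)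
qed

definition QS :: "'k::comm_ring_1 ser set" where
  "QS = {q. \<exists>c. finite {g. c g \<noteq> 0} \<and> (\<forall>g. c g \<noteq> 0 \<longrightarrow> is_comp g \<and> Eps \<notin> set g) \<and> q = ser c}"

definition Rset :: "'k::comm_ring_1 ser set" where
  "Rset = {x. \<exists>q\<in>QS. (\<lambda>h. x h - q h) \<in> Iset}"

lemma QS_zero: "szero \<in> QS"
  unfolding QS_def szero_ser by (intro CollectI exI[of _ "\<lambda>g. 0"]) auto

lemma QS_add: "p \<in> QS \<Longrightarrow> q \<in> QS \<Longrightarrow> sadd p q \<in> QS"
proof -
  assume "p \<in> QS" "q \<in> QS"
  then obtain c d where c: "finite {g. c g \<noteq> 0}" "\<forall>g. c g \<noteq> 0 \<longrightarrow> is_comp g \<and> Eps \<notin> set g" "p = ser c"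
    and d: "finite {g. d g \<noteq> 0}" "\<forall>g. d g \<noteq> 0 \<longrightarrow> is_comp g \<and> Eps \<notin> set g" "q = ser d"
    unfolding QS_def by blast
  have "finite {g. c g + d g \<noteq> 0}"
    by (rule finite_subset[of _ "{g. c g \<noteq> 0} \<union> {g. d g \<noteq> 0}"]) (use c d in auto)
  moreover have "\<forall>g. c g + d g \<noteq> 0 \<longrightarrow> is_comp g \<and> Eps \<notin> set g"
  proof (intro allI impI)
    fix g assume "c g + d g \<noteq> 0"
    then have "c g \<noteq> 0 \<or> d g \<noteq> 0" by auto
    then show "is_comp g \<and> Eps \<notin> set g" using c d by blast
  qed
  ultimately show ?thesis unfolding QS_def c(3) d(3) sadd_ser by (intro CollectI exI[of _ "\<lambda>g. c g + d g"]) auto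
qed

lemma QS_scale: "p \<in> QS \<Longrightarrow> sscale k p \<in> QS"
proof -
  assume "p \<in> QS"
  then obtain c where c: "finite {g. c g \<noteq> 0}" "\<forall>g. c g \<noteq> 0 \<longrightarrow> is_comp g \<and> Eps \<notin> set g" "p = ser c"
    unfolding QS_def by blast
  have "finite {g. k * c g \<noteq> 0}"
    by (rule finite_subset[of _ "{g. c g \<noteq> 0}"]) (use c in auto)
  moreover have "\<forall>g. k * c g \<noteq> 0 \<longrightarrow> is_comp g \<and> Eps \<notin> set g"
  proof (intro allI impI)
    fix g assume "k * c g \<noteq> 0"
    then have "c g \<noteq> 0" by auto
    then show "is_comp g \<and> Eps \<notin> set g" using c by blast
  qed
  ultimately show ?thesis unfolding QS_def c(3) sscale_ser by (intro CollectI exI[of _ "\<lambda>g. k * c g"]) auto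
qed

lemma R_I: "x \<in> Iset \<Longrightarrow> x \<in> Rset"
  unfolding Rset_def mem_Collect_eq using QS_zero by (intro bexI[of _ szero]) (simp_all add: szero_def)

lemma R_QS: "q \<in> QS \<Longrightarrow> q \<in> Rset"
  unfolding Rset_def mem_Collect_eq using I_zero by (intro bexI[of _ q]) (simp_all add: szero_def)

lemma R_add: "x \<in> Rset \<Longrightarrow> y \<in> Rset \<Longrightarrow> sadd x y \<in> Rset"
proof -
  assume "x \<in> Rset" "y \<in> Rset"
  then obtain p q where p: "p \<in> QS" "(\<lambda>h. x h - p h) \<in> Iset" and q: "q \<in> QS" "(\<lambda>h. y h - q h) \<in> Iset"
    unfolding Rset_def by blast
  have "(\<lambda>h. sadd x y h - sadd p q h) = sadd (\<lambda>h. x h - p h) (\<lambda>h. y h - q h)"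
    by (simp add: sadd_def fun_eq_iff algebra_simps)
  then have "(\<lambda>h. sadd x y h - sadd p q h) \<in> Iset" using I_add p q by simp
  then show ?thesis unfolding Rset_def using QS_add[OF p(1) q(1)] by blast
qed

lemma R_scale: "x \<in> Rset \<Longrightarrow> sscale k x \<in> Rset"
proof -
  assume "x \<in> Rset"
  then obtain p where p: "p \<in> QS" "(\<lambda>h. x h - p h) \<in> Iset"
    unfolding Rset_def by blast
  have "(\<lambda>h. sscale k x h - sscale k p h) = sscale k (\<lambda>h. x h - p h)"
    by (simp add: sscale_def fun_eq_iff algebra_simps)
  then have "(\<lambda>h. sscale k x h - sscale k p h) \<in> Iset" using I_scale p by simp
  then show ?thesis unfolding Rset_def using QS_scale[OF p(1)] by blast
qed

lemma R_sum: "finite S \<Longrightarrow> (\<forall>a\<in>S. X a \<in> Rset) \<Longrightarrow> (\<lambda>h. \<Sum>a\<in>S. e a * X a h) \<in> Rset"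
proof (induction S rule: finite_induct)
  case empty
  then show ?case using R_I I_zero by (simp add: szero_def)
next
  case (insert x F)
  have "(\<lambda>h. \<Sum>a\<in>insert x F. e a * X a h) = sadd (sscale (e x) (X x)) (\<lambda>h. \<Sum>a\<in>F. e a * X a h)"
    using insert by (simp add: sadd_def sscale_def)
  then show ?case by (simp only:) (intro R_add R_scale; use insert in auto)
qed


definition mu :: "ntil list \<Rightarrow> nat" where
  "mu a = ell_eps a * (length a + 1) + lead a"

lemma mu_lt1:
  fixes eg e' lg L ld la :: nat
  assumes "eg \<le> e'" "lg \<le> L" "ld \<le> lg"
  shows "eg * (lg + 1) + ld < Suc e' * (L + 1) + la"
proof -
  have "eg * (lg + 1) \<le> e' * (L + 1)" using assms by (intro mult_le_mono) auto
  then show ?thesis using assms by simp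
qed

lemma mu_lt2:
  fixes eg e lg L ld la :: nat
  assumes "eg \<le> e" "lg \<le> L" "ld < la"
  shows "eg * (lg + 1) + ld < e * (L + 1) + la"
proof -
  have "eg * (lg + 1) \<le> e * (L + 1)" using assms by (intro mult_le_mono) auto
  then show ?thesis using assms by simp
qed

lemma lead_le: "lead g \<le> length g"
  by (simp add: lead_def length_takeWhile_le)

lemma Mser_R: "is_comp a \<Longrightarrow> Mser a \<in> (Rset :: 'k::comm_ring_1 ser set)"
proof (induction "mu a" arbitrary: a rule: less_induct)
  case less
  show ?case
  proof (cases "Eps \<in> set a")
    case False
    have "Mser a \<in> (QS :: 'k ser set)" unfolding Mser_ser QS_def
      by (intro CollectI exI[of _ "dl a"]) (use less.prems False in \<open>auto simp: dl_def\<close>)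
    then show ?thesis by (rule R_QS)
  next
    case True
    define u where "u = takeWhile (\<lambda>x. x \<noteq> Eps) a"
    define r where "r = dropWhile (\<lambda>x. x \<noteq> Eps) a"
    have ar: "a = u @ r" by (simp add: u_def r_def)
    have rne: "r \<noteq> []" using True by (auto simp: r_def dropWhile_eq_Nil_conv)
    have "hd r = Eps" using hd_dropWhile[of "\<lambda>x. x \<noteq> Eps" a] rne by (simp add: r_def)
    then obtain w where rw: "r = Eps # w" using rne by (cases r) auto
    have aeq: "a = u @ Eps # w" using ar rw by simp
    have uE: "Eps \<notin> set u" unfolding u_def by (auto dest: set_takeWhileD)
    have cu: "is_comp u" and cw: "is_comp (Eps # w)" using less.prems aeq by (auto simp: is_comp_def)
    have lead_a: "lead a = length u" by (simp add: lead_def u_def)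
    have ell_a: "ell_eps a = Suc (ell_eps w)" using aeq ell_noEps[OF uE] by (simp add: ell_append ell_Cons)
    show ?thesis
    proof (cases "u = []")
      case True
      then have "a \<in> C_eps" using less.prems aeq by (simp add: C_eps_def)
      then have "Mser a \<in> (Iset :: 'k ser set)" using I_B by (auto simp: Bset_def)
      then show ?thesis by (rule R_I)
    next
      case False
      let ?F = "qs u (Eps # w) :: ntil list \<Rightarrow> 'k"
      have Xeq: "smult (Mser u) (Mser (Eps # w)) = ser ?F"
        unfolding Mser_ser smult_ser by (rule ser_cong, rule conv_dl[OF cu cw])
      have X_I: "ser ?F \<in> (Iset :: 'k ser set)"
        unfolding Xeq[symmetric]
      proof (rule I_mult[OF Mser_W[OF cu]])
        have "Mser (Eps # w) \<in> (Bset :: 'k ser set)" using cw by (auto simp: Bset_def C_eps_def)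
        then show "Mser (Eps # w) \<in> (Iset :: 'k ser set)" using I_B by blast
      qed
      let ?U = "insert a {g. ?F g \<noteq> 0}"
      have fU: "finite ?U" using finite_supp_qs by auto
      have Fa: "?F a = 1" using qs_Eps_struct[where 'k='k, OF cu uE] aeq by simp
      have "ser ?F = (\<lambda>h. \<Sum>g\<in>?U. ?F g * Mser g h)"
        unfolding ser_sum[OF fU] by (rule ser_cong) auto
      also have "\<dots> = (\<lambda>h. Mser a h + (\<Sum>g\<in>?U - {a}. ?F g * Mser g h))"
        using finite_supp_qs[where 'a='k, of u "Eps # w"] Fa by (simp add: sum.insert_remove)
      finally have eq: "ser ?F = (\<lambda>h. Mser a h + (\<Sum>g\<in>?U - {a}. ?F g * Mser g h))" .
      have Y: "(\<lambda>h. \<Sum>g\<in>?U - {a}. ?F g * Mser g h) \<in> (Rset :: 'k ser set)"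
      proof (rule R_sum)
        show "finite (?U - {a})" using fU by simp
        show "\<forall>g\<in>?U - {a}. Mser g \<in> (Rset :: 'k ser set)"
        proof
          fix g assume g: "g \<in> ?U - {a}"
          then have Fg: "?F g \<noteq> 0" and ga: "g \<noteq> a" by auto
          have sp: "length g \<le> length u + length (Eps # w)" "ell_eps g \<le> ell_eps u + ell_eps (Eps # w)" "is_comp g"
            using qs_supp[OF Fg] cu cw by auto
          have st: "ell_eps g \<le> ell_eps w \<or> lead g < length u"
            using qs_Eps_struct[where 'k='k, OF cu uE] Fg ga aeq by blast
          have lg: "length g \<le> length a" using sp(1) aeq by simp
          have eg: "ell_eps g \<le> ell_eps a" using sp(2) ell_a ell_noEps[OF uE] by (simp add: ell_Cons)
          have "mu g < mu a"
          proof (cases "ell_eps g \<le> ell_eps w")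
            case True
            then show ?thesis unfolding mu_def ell_a using mu_lt1[OF True lg lead_le] by simp
          next
            case False
            then have "lead g < lead a" using st lead_a by simp
            then show ?thesis unfolding mu_def using mu_lt2[OF eg lg] by simp
          qed
          then show "Mser g \<in> (Rset :: 'k ser set)" using less.hyps sp(3) by blast
        qed
      qed
      have "Mser a = sadd (ser ?F) (sscale (-1) (\<lambda>h. \<Sum>g\<in>?U - {a}. ?F g * Mser g h))"
        unfolding eq by (simp add: sadd_def sscale_def fun_eq_iff)
      then show ?thesis using R_add[OF R_I[OF X_I] R_scale[OF Y]] by simp
    qed
  qed
qed

lemma QS_W: "q \<in> QS \<Longrightarrow> q \<in> WCQSym"
  unfolding QS_def using W_ser by blast

locale phiL =
  fixes \<phi> :: "'k::comm_ring_1 ser \<Rightarrow> 'k ser"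
  assumes lin_add: "\<forall>x\<in>WCQSym. \<forall>y\<in>WCQSym. \<phi> (sadd x y) = sadd (\<phi> x) (\<phi> y)"
    and lin_scale: "\<forall>c. \<forall>x\<in>WCQSym. \<phi> (sscale c x) = sscale c (\<phi> x)"
    and phi_N: "\<forall>\<alpha>\<in>C_N. \<phi> (Mser \<alpha>) = sscale ((-1) ^ ell_eps \<alpha>) (Mser (bar \<alpha>))"
    and phi_eps: "\<forall>\<alpha>\<in>C_eps. \<phi> (Mser \<alpha>) = szero"
begin

lemma phi_Mser: "is_comp a \<Longrightarrow> \<phi> (Mser a) = ser (K a)"
proof -
  assume ca: "is_comp a"
  show ?thesis
  proof (cases "a = [] \<or> hd a \<noteq> Eps")
    case True
    then have "a \<in> C_N" using ca by (auto simp: C_N_def)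
    then have "\<phi> (Mser a) = sscale ((-1) ^ ell_eps a) (Mser (bar a))" using phi_N by blast
    also have "\<dots> = ser (K a)" unfolding Mser_ser sscale_ser K_eq using True by simp
    finally show ?thesis .
  next
    case False
    then have "a \<in> C_eps" using ca by (auto simp: C_eps_def)
    then have "\<phi> (Mser a) = szero" using phi_eps by blast
    also have "\<dots> = ser (K a)" unfolding szero_ser K_eq using False by simp
    finally show ?thesis .
  qed
qed

lemma phi_szero: "\<phi> szero = szero"
proof -
  have "\<phi> szero = \<phi> (sscale 0 szero)" by (simp add: sscale_def szero_def)
  also have "\<dots> = sscale 0 (\<phi> szero)" using lin_scale szero_W by blast
  also have "\<dots> = szero" by (simp add: sscale_def szero_def)
  finally show ?thesis .
qed

lemma phi_lin:
  assumes "finite S" "\<forall>a\<in>S. is_comp a"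
  shows "\<phi> (\<lambda>h. \<Sum>a\<in>S. e a * Mser a h) = (\<lambda>h. \<Sum>a\<in>S. e a * \<phi> (Mser a) h)"
  using assms
proof (induction S rule: finite_induct)
  case empty
  then show ?case using phi_szero by (simp add: szero_def)
next
  case (insert x F)
  have cx: "is_comp x" using insert by auto
  have W1: "sscale (e x) (Mser x) \<in> WCQSym" by (rule sscale_W[OF Mser_W[OF cx]])
  have W2: "(\<lambda>h. \<Sum>a\<in>F. e a * Mser a h) \<in> WCQSym" unfolding WCQSym_def using insert by blast
  have eq1: "(\<lambda>h. \<Sum>a\<in>insert x F. e a * Mser a h) = sadd (sscale (e x) (Mser x)) (\<lambda>h. \<Sum>a\<in>F. e a * Mser a h)"
    using insert by (simp add: sadd_def sscale_def)
  have "\<phi> (\<lambda>h. \<Sum>a\<in>insert x F. e a * Mser a h) = sadd (sscale (e x) (\<phi> (Mser x))) (\<phi> (\<lambda>h. \<Sum>a\<in>F. e a * Mser a h))"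
  proof -
    have "\<phi> (sscale (e x) (Mser x)) = sscale (e x) (\<phi> (Mser x))" using lin_scale Mser_W[OF cx] by blast
    moreover have "\<phi> (sadd (sscale (e x) (Mser x)) (\<lambda>h. \<Sum>a\<in>F. e a * Mser a h)) =
      sadd (\<phi> (sscale (e x) (Mser x))) (\<phi> (\<lambda>h. \<Sum>a\<in>F. e a * Mser a h))"
      using lin_add W1 W2 by blast
    ultimately show ?thesis unfolding eq1 by simp
  qed
  also have "\<dots> = (\<lambda>h. \<Sum>a\<in>insert x F. e a * \<phi> (Mser a) h)"
    using insert by (simp add: sadd_def sscale_def)
  finally show ?case .
qed

lemma phi_ser:
  assumes "finite {g. c g \<noteq> 0}" "\<forall>g. c g \<noteq> 0 \<longrightarrow> is_comp g"
  shows "\<phi> (ser c) = ser (SumT K c)"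
proof -
  let ?S = "{g. c g \<noteq> 0}"
  have "ser c = (\<lambda>h. \<Sum>a\<in>?S. c a * Mser a h)"
    unfolding ser_sum[OF assms(1)] by (rule ser_cong) auto
  then have "\<phi> (ser c) = (\<lambda>h. \<Sum>a\<in>?S. c a * \<phi> (Mser a) h)"
    using phi_lin[OF assms(1)] assms(2) by simp
  also have "\<dots> = (\<lambda>h. \<Sum>a\<in>?S. c a * ser (K a) h)"
    using phi_Mser assms(2) by simp
  also have "\<dots> = ser (SumT K c)"
    by (auto simp: ser_def SumT_def fun_eq_iff)
  finally show ?thesis .
qed

lemma phi_mult:
  assumes "x \<in> WCQSym" "y \<in> WCQSym"
  shows "\<phi> (smult x y) = smult (\<phi> x) (\<phi> y)"
proof -
  obtain c d where c: "finite {g. c g \<noteq> 0}" "\<forall>g. c g \<noteq> 0 \<longrightarrow> is_comp g" "x = ser c"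
    and d: "finite {g. d g \<noteq> 0}" "\<forall>g. d g \<noteq> 0 \<longrightarrow> is_comp g" "y = ser d"
    using assms unfolding WCQSym_iff by blast
  let ?Sc = "{g. c g \<noteq> 0}" and ?Sd = "{g. d g \<noteq> 0}"
  let ?U = "\<Union>a\<in>?Sc. \<Union>b\<in>?Sd. {g. qs a b g \<noteq> (0::'k)}"
  have fU: "finite ?U" using c(1) d(1) finite_supp_qs by blast
  have "\<phi> (smult x y) = ser (SumT K (QG c d))"
    unfolding c(3) d(3) QG_props(1)[OF c(1,2) d(1,2)]
    by (rule phi_ser[OF QG_props(3,4)[OF c(1,2) d(1,2)]])
  also have "\<dots> = ser (conv (SumT K c) (SumT K d))"
  proof (rule ser_cong)
    fix w assume cw: "is_comp w"
    have "SumT K (QG c d) w = (\<Sum>g\<in>?U. QG c d g * K g w)"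
      by (rule SumT_U[OF fU QG_props(2)[OF c(1,2) d(1,2)]])
    also have "\<dots> = (\<Sum>g\<in>?U. \<Sum>a\<in>?Sc. \<Sum>b\<in>?Sd. c a * d b * (qs a b g * K g w))"
      unfolding QG_def by (simp add: sum_distrib_right mult.assoc)
    also have "\<dots> = (\<Sum>a\<in>?Sc. \<Sum>g\<in>?U. \<Sum>b\<in>?Sd. c a * d b * (qs a b g * K g w))"
      by (rule sum.swap)
    also have "\<dots> = (\<Sum>a\<in>?Sc. \<Sum>b\<in>?Sd. \<Sum>g\<in>?U. c a * d b * (qs a b g * K g w))"
      by (rule sum.cong[OF refl]) (rule sum.swap)
    also have "\<dots> = (\<Sum>a\<in>?Sc. \<Sum>b\<in>?Sd. c a * d b * SumT K (qs a b) w)"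
    proof (rule sum.cong[OF refl], rule sum.cong[OF refl])
      fix a b assume a: "a \<in> ?Sc" and b: "b \<in> ?Sd"
      have "SumT K (qs a b :: _ \<Rightarrow> 'k) w = (\<Sum>g\<in>?U. qs a b g * K g w)"
        by (rule SumT_U[OF fU]) (use a b in blast)
      then show "(\<Sum>g\<in>?U. c a * d b * (qs a b g * K g w)) = c a * d b * SumT K (qs a b) w"
        by (simp add: sum_distrib_left)
    qed
    also have "\<dots> = (\<Sum>a\<in>?Sc. \<Sum>b\<in>?Sd. c a * d b * conv (K a) (K b) w)"
    proof (rule sum.cong[OF refl], rule sum.cong[OF refl])
      fix a b assume a: "a \<in> ?Sc" and b: "b \<in> ?Sd"
      have ca: "is_comp a" and cb: "is_comp b" using a b c d by auto
      show "c a * d b * SumT K (qs a b) w = c a * d b * conv (K a) (K b) w"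
        by (simp only: qs_K[OF ca cb] conv_KK[OF ca cb cw])
    qed
    also have "\<dots> = conv (\<lambda>x. \<Sum>a\<in>?Sc. c a * K a x) (\<lambda>x. \<Sum>b\<in>?Sd. d b * K b x) w"
      by (rule conv_bilin[OF c(1) d(1), symmetric])
    also have "\<dots> = conv (SumT K c) (SumT K d) w"
      by (simp add: SumT_def[abs_def])
    finally show "SumT K (QG c d) w = conv (SumT K c) (SumT K d) w" .
  qed
  also have "\<dots> = smult (\<phi> x) (\<phi> y)"
    unfolding c(3) d(3) phi_ser[OF c(1,2)] phi_ser[OF d(1,2)] smult_ser ..
  finally show ?thesis .
qed


lemma phi_QS: "q \<in> QS \<Longrightarrow> \<phi> q = q"
proof -
  assume "q \<in> QS"
  then obtain c where c: "finite {g. c g \<noteq> 0}" "\<forall>g. c g \<noteq> 0 \<longrightarrow> is_comp g \<and> Eps \<notin> set g" "q = ser c"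
    unfolding QS_def by blast
  have "SumT K c = c"
  proof
    fix w
    have "SumT K c w = (\<Sum>g\<in>{g. c g \<noteq> 0}. if g = w then c g else 0)"
      unfolding SumT_def
    proof (rule sum.cong[OF refl])
      fix g assume "g \<in> {g. c g \<noteq> 0}"
      then have gE: "Eps \<notin> set g" using c by blast
      then have "g = [] \<or> hd g \<noteq> Eps" by (cases g) auto
      moreover have "bar g = g" using gE by (auto simp: bar_def filter_id_conv)
      ultimately show "c g * K g w = (if g = w then c g else 0)"
        using ell_noEps[OF gE] by (auto simp: K_def J_def)
    qed
    also have "\<dots> = c w" using c(1) by (simp add: sum.delta)
    finally show "SumT K c w = c w" .
  qed
  then show "\<phi> q = q" using phi_ser[of c] c by auto
qed

lemma I_sub_Ker: "Iset \<subseteq> {x \<in> WCQSym. \<phi> x = szero}"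
  unfolding Iset_def gen_ideal_def
proof (rule Inter_lower, safe)
  fix x :: "'k ser" assume "x \<in> Bset" then show "x \<in> WCQSym" using B_W by blast
next
  fix x :: "'k ser" assume "x \<in> Bset" then show "\<phi> x = szero" using phi_eps by (auto simp: Bset_def)
next
  show "szero \<in> WCQSym" by (rule szero_W)
next
  show "\<phi> szero = szero" by (rule phi_szero)
next
  fix x y :: "'k ser" assume "x \<in> WCQSym" "y \<in> WCQSym" then show "sadd x y \<in> WCQSym" by (rule sadd_W)
next
  fix x y :: "'k ser" assume "x \<in> WCQSym" "y \<in> WCQSym" "\<phi> x = szero" "\<phi> y = szero"
  then show "\<phi> (sadd x y) = szero" using lin_add by (simp add: sadd_def szero_def)
next
  fix a x :: "'k ser" assume "a \<in> WCQSym" "x \<in> WCQSym" then show "smult a x \<in> WCQSym" by (rule smult_W)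
next
  fix a x :: "'k ser" assume "a \<in> WCQSym" "x \<in> WCQSym" "\<phi> x = szero"
  then have "\<phi> (smult a x) = smult (\<phi> a) szero" using phi_mult by simp
  moreover have "smult (\<phi> a) szero = szero" by (simp add: smult_def szero_def fun_eq_iff)
  ultimately show "\<phi> (smult a x) = szero" by simp
qed

lemma Ker_sub_I: "{x \<in> WCQSym. \<phi> x = szero} \<subseteq> Iset"
proof safe
  fix x assume xW: "x \<in> WCQSym" and px: "\<phi> x = szero"
  obtain S e where S: "finite S" "\<forall>a\<in>S. is_comp a" "x = (\<lambda>h. \<Sum>a\<in>S. e a * Mser a h)"
    using xW by (auto simp: WCQSym_def)
  have "x \<in> Rset" unfolding S(3) by (rule R_sum[OF S(1)]) (use S(2) Mser_R in blast)
  then obtain q where q: "q \<in> QS" "(\<lambda>h. x h - q h) \<in> Iset" unfolding Rset_def by blast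
  have qW: "q \<in> WCQSym" by (rule QS_W[OF q(1)])
  have d: "(\<lambda>h. x h - q h) = sadd x (sscale (-1) q)" by (simp add: sadd_def sscale_def fun_eq_iff)
  have "\<phi> (\<lambda>h. x h - q h) = szero" using I_sub_Ker q(2) by blast
  moreover have "\<phi> (sadd x (sscale (-1) q)) = sadd (\<phi> x) (sscale (-1) (\<phi> q))"
    using lin_add lin_scale xW sscale_W[OF qW] qW by simp
  ultimately have "sadd szero (sscale (-1) q) = szero" using d px phi_QS[OF q(1)] by simp
  then have "q = szero" by (simp add: sadd_def sscale_def szero_def fun_eq_iff)
  then have "(\<lambda>h. x h - q h) = x" by (simp add: szero_def)
  then show "x \<in> Iset" using q(2) by simp
qed

lemma main: "{x \<in> WCQSym. \<phi> x = szero} = gen_ideal WCQSym {Mser \<alpha> | \<alpha>. \<alpha> \<in> C_eps}"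
  using I_sub_Ker Ker_sub_I unfolding Iset_def Bset_def by blast

end

theorem corollary3p12:
  fixes \<phi> :: "'k::comm_ring_1 ser \<Rightarrow> 'k ser"
  assumes nontriv: "(1::'k) \<noteq> 0"
    and Q_sub: "\<forall>n::nat. n > 0 \<longrightarrow> (\<exists>y::'k. of_nat n * y = 1)"
    and lin_add: "\<forall>x\<in>WCQSym. \<forall>y\<in>WCQSym. \<phi> (sadd x y) = sadd (\<phi> x) (\<phi> y)"
    and lin_scale: "\<forall>c. \<forall>x\<in>WCQSym. \<phi> (sscale c x) = sscale c (\<phi> x)"
    and phi_N: "\<forall>\<alpha>\<in>C_N. \<phi> (Mser \<alpha>) = sscale ((-1) ^ ell_eps \<alpha>) (Mser (bar \<alpha>))"
    and phi_eps: "\<forall>\<alpha>\<in>C_eps. \<phi> (Mser \<alpha>) = szero"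
  shows "{x \<in> WCQSym. \<phi> x = szero} = gen_ideal WCQSym {Mser \<alpha> | \<alpha>. \<alpha> \<in> C_eps}"
proof -
  interpret phiL \<phi> using lin_add lin_scale phi_N phi_eps by unfold_locales
  show ?thesis by (rule main)
qed

end
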